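(* Let $L\subseteq\{a,b\}^*$ be the set of words whose last maximal block of the form $a^+b^*$ contains at least as many $a$'s as $b$'s; precisely, $L$ consists of the empty word together with all words $u\,a^nb^m$ where $u\in\{\varepsilon\}\cup\{a,b\}^*b$, $n\ge 1$ and $0\le m\le n$. Then $L\in\mathrm{CN}_1$ and $L\notin\mathrm{CH}$, i.e. $L$ is recognised by some (nondeterministic) $1$-VASS under coverability acceptance but by no history-deterministic $k$-VASS (for any $k$) under coverability acceptance.
   Context: Fix a finite alphabet $\Sigma$. A $k$-dimensional vector addition system with states ($k$-VASS) is a tuple $(Q,q_0,F,\delta)$ where $Q$ is a finite set of states, $q_0\in Q$ is initial, $F\subseteq Q$ is the set of accepting states, and $\delta\subseteq Q\times\Sigma\times\mathbb{Z}^k\times Q$ is a finite set of transitions (no $\varepsilon$-transitions). A run on a word $w=a_1\cdots a_n$ is a sequence of transitions $(p_{i-1},a_i,d_i,p_i)$ with $p_0=q_0$ such that the counter vectors $v_0=\vec 0$, $v_i=v_{i-1}+d_i$ all lie in $\mathbb{N}^k$. Under coverability acceptance the run is accepting if $p_n\in F$. The language is the set of words having an accepting run. A VASS is history-deterministic if there is a resolver, i.e. a function $r$ mapping each finite sequence of transitions and each letter $a$ to a transition labelled $a$, such that for every word $w$ in the language, the sequence of transitions obtained by successively applying $r$ to the letters of $w$ is a run on $w$ (counters stay nonnegative) and is accepting. $\mathrm{CN}_k$ (resp. $\mathrm{CH}_k$) is the class of languages recognised by arbitrary (resp. history-deterministic) $k$-VASS under coverability acceptance, and $\mathrm{CH}=\bigcup_{k\ge1}\mathrm{CH}_k$.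 *)

theory Defs
  imports Main
begin

type_synonym 'a trans = "nat \<times> 'a \<times> int list \<times> nat"

record 'a vass =
  states :: "nat set"
  init   :: nat
  final  :: "nat set"
  delta  :: "'a trans set"

definition is_vass :: "nat \<Rightarrow> 'a vass \<Rightarrow> bool" where
  "is_vass k V \<longleftrightarrow> finite (states V) \<and> init V \<in> states V \<and> final V \<subseteq> states V
     \<and> finite (delta V)
     \<and> (\<forall>(p, a, d, q) \<in> delta V. p \<in> states V \<and> q \<in> states V \<and> length d = k)"

definition src :: "'a trans \<Rightarrow> nat" where "src t = fst t"
definition lbl :: "'a trans \<Rightarrow> 'a" where "lbl t = fst (snd t)"
definition eff :: "'a trans \<Rightarrow> int list" where "eff t = fst (snd (snd t))"
definition tgt :: "'a trans \<Rightarrow> nat" where "tgt t = snd (snd (snd t))"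

definition counters :: "nat \<Rightarrow> 'a trans list \<Rightarrow> int list" where
  "counters k ts = foldl (\<lambda>v t. map2 (+) v (eff t)) (replicate k 0) ts"

definition last_state :: "'a vass \<Rightarrow> 'a trans list \<Rightarrow> nat" where
  "last_state V ts = (if ts = [] then init V else tgt (last ts))"

definition is_run :: "nat \<Rightarrow> 'a vass \<Rightarrow> 'a list \<Rightarrow> 'a trans list \<Rightarrow> bool" where
  "is_run k V w ts \<longleftrightarrow> length ts = length w
     \<and> (\<forall>i < length ts. ts ! i \<in> delta V \<and> lbl (ts ! i) = w ! i
            \<and> src (ts ! i) = last_state V (take i ts))
     \<and> (\<forall>i \<le> length ts. \<forall>x \<in> set (counters k (take i ts)). x \<ge> 0)"

definition accepting_run :: "nat \<Rightarrow> 'a vass \<Rightarrow> 'a list \<Rightarrow> 'a trans list \<Rightarrow> bool" where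
  "accepting_run k V w ts \<longleftrightarrow> is_run k V w ts \<and> last_state V ts \<in> final V"

definition lang :: "nat \<Rightarrow> 'a vass \<Rightarrow> 'a list set" where
  "lang k V = {w. \<exists>ts. accepting_run k V w ts}"

fun resolve :: "('a trans list \<Rightarrow> 'a \<Rightarrow> 'a trans) \<Rightarrow> 'a trans list \<Rightarrow> 'a list \<Rightarrow> 'a trans list" where
  "resolve r h [] = h"
| "resolve r h (a # w) = resolve r (h @ [r h a]) w"

definition is_resolver :: "nat \<Rightarrow> 'a vass \<Rightarrow> ('a trans list \<Rightarrow> 'a \<Rightarrow> 'a trans) \<Rightarrow> bool" where
  "is_resolver k V r \<longleftrightarrow>
     (\<forall>h a. r h a \<in> delta V \<and> lbl (r h a) = a)
     \<and> (\<forall>w \<in> lang k V. accepting_run k V w (resolve r [] w))"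

definition history_deterministic :: "nat \<Rightarrow> 'a vass \<Rightarrow> bool" where
  "history_deterministic k V \<longleftrightarrow> (\<exists>r. is_resolver k V r)"

definition CN :: "nat \<Rightarrow> 'a list set set" where
  "CN k = {L. \<exists>V. is_vass k V \<and> lang k V = L}"

definition CH_k :: "nat \<Rightarrow> 'a list set set" where
  "CH_k k = {L. \<exists>V. is_vass k V \<and> history_deterministic k V \<and> lang k V = L}"

definition CH :: "'a list set set" where
  "CH = (\<Union>k \<in> {1..}. CH_k k)"

datatype ab = A | B

definition Lab :: "ab list set" where
  "Lab = {[]} \<union> {u @ replicate n A @ replicate m B | u n m.
                   (u = [] \<or> (u \<noteq> [] \<and> last u = B)) \<and> n \<ge> 1 \<and> m \<le> n}"

end

theory Submission imports Defs "HOL-Library.Infinite_Set" begin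

lemma is_run_length: "is_run k V w ts \<Longrightarrow> length ts = length w"
  by (simp add: is_run_def)

lemma last_state_snoc[simp]: "last_state V (ts@[t]) = tgt t"
  by (simp add: last_state_def)

lemma last_state_append: "last_state V (xs @ ys) = (if ys = [] then last_state V xs else tgt (last ys))"
  by (simp add: last_state_def)

lemma counters_snoc: "counters k (ts@[t]) = map2 (+) (counters k ts) (eff t)"
  by (simp add: counters_def)

lemma is_run_Nil: "is_run k V [] []"
  by (simp add: is_run_def counters_def)

lemma is_run_snoc:
  "is_run k V (w@[a]) (ts@[t]) \<longleftrightarrow> is_run k V w ts \<and> t \<in> delta V \<and> lbl t = a
     \<and> src t = last_state V ts \<and> (\<forall>x\<in>set (counters k (ts@[t])). x \<ge> 0)"
proof
  assume H: "is_run k V (w@[a]) (ts@[t])"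
  then have len: "length ts = length w" by (simp add: is_run_def)
  have A1: "\<forall>i < length (ts@[t]). (ts@[t]) ! i \<in> delta V \<and> lbl ((ts@[t]) ! i) = (w@[a]) ! i
            \<and> src ((ts@[t]) ! i) = last_state V (take i (ts@[t]))"
    using H by (simp add: is_run_def)
  have A2: "\<forall>i \<le> length (ts@[t]). \<forall>x \<in> set (counters k (take i (ts@[t]))). x \<ge> 0"
    using H by (simp add: is_run_def)
  have "is_run k V w ts"
    unfolding is_run_def
  proof (intro conjI allI impI)
    show "length ts = length w" by fact
    fix i assume i: "i < length ts"
    from A1[rule_format, of i] i len show "ts ! i \<in> delta V" "lbl (ts ! i) = w ! i"
      "src (ts ! i) = last_state V (take i ts)"
      by (auto simp: nth_append)
  next
    fix i assume i: "i \<le> length ts"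
    from A2[rule_format, of i] i show "\<forall>x\<in>set (counters k (take i ts)). 0 \<le> x" by auto
  qed
  moreover have "t \<in> delta V \<and> lbl t = a \<and> src t = last_state V ts"
    using A1[rule_format, of "length ts"] len by (simp add: nth_append)
  moreover have "\<forall>x\<in>set (counters k (ts@[t])). x \<ge> 0"
    using A2[rule_format, of "length ts + 1"] by simp
  ultimately show "is_run k V w ts \<and> t \<in> delta V \<and> lbl t = a
     \<and> src t = last_state V ts \<and> (\<forall>x\<in>set (counters k (ts@[t])). x \<ge> 0)" by blast
next
  assume H: "is_run k V w ts \<and> t \<in> delta V \<and> lbl t = a
     \<and> src t = last_state V ts \<and> (\<forall>x\<in>set (counters k (ts@[t])). x \<ge> 0)"
  then have len: "length ts = length w" by (simp add: is_run_def)
  show "is_run k V (w@[a]) (ts@[t])"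
    unfolding is_run_def
  proof (intro conjI allI impI)
    show "length (ts @ [t]) = length (w @ [a])" using len by simp
    fix i assume i: "i < length (ts@[t])"
    show "(ts @ [t]) ! i \<in> delta V" "lbl ((ts @ [t]) ! i) = (w @ [a]) ! i"
      "src ((ts @ [t]) ! i) = last_state V (take i (ts @ [t]))"
    proof -
      consider "i < length ts" | "i = length ts" using i by fastforce
      then have "(ts @ [t]) ! i \<in> delta V \<and> lbl ((ts @ [t]) ! i) = (w @ [a]) ! i
       \<and> src ((ts @ [t]) ! i) = last_state V (take i (ts @ [t]))"
      proof cases
        case 1 then show ?thesis using H len by (simp add: is_run_def nth_append)
      next
        case 2 then show ?thesis using H len by (simp add: nth_append)
      qed
      then show "(ts @ [t]) ! i \<in> delta V" "lbl ((ts @ [t]) ! i) = (w @ [a]) ! i"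
      "src ((ts @ [t]) ! i) = last_state V (take i (ts @ [t]))" by auto
    qed
  next
    fix i assume i: "i \<le> length (ts@[t])"
    consider "i \<le> length ts" | "i = length ts + 1" using i by fastforce
    then show "\<forall>x\<in>set (counters k (take i (ts @ [t]))). 0 \<le> x"
    proof cases
      case 1 then show ?thesis using H by (simp add: is_run_def)
    next
      case 2 then show ?thesis using H by simp
    qed
  qed
qed

lemma resolve_snoc: "resolve r h (w@[a]) = resolve r h w @ [r (resolve r h w) a]"
  by (induction w arbitrary: h) auto

lemma resolve_append: "resolve r h (w@u) = resolve r (resolve r h w) u"
  by (induction w arbitrary: h) auto

lemma resolve_prefix: "\<exists>Z. resolve r h u = h @ Z \<and> length Z = length u \<and> (\<forall>t\<in>set Z. \<exists>h' a. t = r h' a)"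
proof (induction u arbitrary: h)
  case Nil then show ?case by simp
next
  case (Cons a u)
  obtain Z where "resolve r (h @ [r h a]) u = (h @ [r h a]) @ Z" "length Z = length u"
    "\<forall>t\<in>set Z. \<exists>h' a. t = r h' a" using Cons by blast
  then show ?case by (intro exI[of _ "r h a # Z"]) auto
qed

definition es :: "'a trans list \<Rightarrow> nat \<Rightarrow> int" where
  "es ts i = sum_list (map (\<lambda>t. eff t ! i) ts)"

lemma es_append[simp]: "es (xs @ ys) i = es xs i + es ys i"
  by (simp add: es_def)

lemma counters_es:
  assumes "\<forall>t\<in>set ts. length (eff t) = k"
  shows "counters k ts = map (es ts) [0..<k]"
  using assms
proof (induction ts rule: rev_induct)
  case Nil then show ?case by (simp add: counters_def es_def map_replicate_const)
next
  case (snoc t ts)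
  then have IH: "counters k ts = map (es ts) [0..<k]" by simp
  have lt: "length (eff t) = k" using snoc by simp
  show ?case
    by (rule nth_equalityI) (auto simp: counters_snoc IH lt es_def)
qed

lemma decomp: "\<exists>x n. w = x @ replicate n A \<and> (x = [] \<or> last x = B)"
proof (induction w rule: rev_induct)
  case Nil then show ?case by auto
next
  case (snoc c w)
  then obtain x n where "w = x @ replicate n A" "x = [] \<or> last x = B" by blast
  then show ?case
  proof (cases c)
    case A then show ?thesis using \<open>w = x @ replicate n A\<close> \<open>x = [] \<or> last x = B\<close>
      by (intro exI[of _ x] exI[of _ "Suc n"]) (simp add: replicate_append_same)
  next
    case B then show ?thesis by (intro exI[of _ "w@[c]"] exI[of _ 0]) simp
  qed
qed

lemma tw_rep: "takeWhile (\<lambda>c. c = A) (replicate m A @ B # l) = replicate m A"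
  by (induction m) auto

lemma tw_rep0: "takeWhile (\<lambda>c. c = A) (replicate m A) = replicate m A"
  by (induction m) auto

definition sig2 :: "ab list \<Rightarrow> nat \<times> nat" where
  "sig2 w = (length (takeWhile (\<lambda>c. c = B) (rev w)),
             length (takeWhile (\<lambda>c. c = A) (dropWhile (\<lambda>c. c = B) (rev w))))"

lemma sig2_eq:
  assumes "x = [] \<or> last x = B" "m \<ge> 1"
  shows "sig2 (x @ replicate m A @ replicate j B) = (j, m)"
proof -
  have r: "rev (x @ replicate m A @ replicate j B) = replicate j B @ (replicate m A @ rev x)"
    by simp
  have h: "rev x = [] \<or> hd (rev x) = B" using assms(1)
    by (auto simp: hd_rev)
  obtain m' where m': "m = Suc m'" using assms(2) by (cases m) auto
  have t1: "takeWhile (\<lambda>c. c = B) (replicate j B @ (replicate m A @ rev x)) = replicate j B"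
    by (subst takeWhile_append2) (auto simp: m')
  have d1: "dropWhile (\<lambda>c. c = B) (replicate j B @ (replicate m A @ rev x)) = replicate m A @ rev x"
    by (subst dropWhile_append2) (auto simp: m')
  have t2: "takeWhile (\<lambda>c. c = A) (replicate m A @ rev x) = replicate m A"
    using h by (cases "rev x") (auto simp: tw_rep tw_rep0)
  show ?thesis unfolding sig2_def r t1 d1 t2 by simp
qed

lemma Lab_iff:
  assumes "x = [] \<or> last x = B" "m \<ge> 1"
  shows "x @ replicate m A @ replicate j B \<in> Lab \<longleftrightarrow> j \<le> m"
proof
  assume "x @ replicate m A @ replicate j B \<in> Lab"
  then obtain u n j' where e: "x @ replicate m A @ replicate j B = u @ replicate n A @ replicate j' B"
    and c: "u = [] \<or> (u \<noteq> [] \<and> last u = B)" "n \<ge> 1" "j' \<le> n"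
    using assms(2) unfolding Lab_def by auto
  have "sig2 (x @ replicate m A @ replicate j B) = (j, m)" using sig2_eq assms by blast
  moreover have "sig2 (u @ replicate n A @ replicate j' B) = (j', n)" using sig2_eq c by blast
  ultimately show "j \<le> m" using e c by simp
next
  assume "j \<le> m"
  then show "x @ replicate m A @ replicate j B \<in> Lab"
    using assms unfolding Lab_def by blast
qed

lemma snocA_Lab: "w @ [A] \<in> Lab"
proof -
  obtain x n where "w = x @ replicate n A" "x = [] \<or> last x = B" using decomp by blast
  then have "w @ [A] = x @ replicate (Suc n) A @ replicate 0 B"
    by (simp add: replicate_append_same)
  moreover have "x @ replicate (Suc n) A @ replicate 0 B \<in> Lab"
    using Lab_iff[of x "Suc n" 0] \<open>x = [] \<or> last x = B\<close> by simp
  ultimately show ?thesis by simp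
qed

lemma dich1:
  fixes s :: "nat \<Rightarrow> int"
  assumes inf: "infinite M" and nn: "\<forall>m\<in>M. s m \<ge> 0"
  shows "\<exists>M'\<subseteq>M. infinite M' \<and> ((\<exists>v. \<forall>m\<in>M'. s m = v) \<or> (\<forall>N. finite {m\<in>M'. s m < N}))"
proof (cases "finite (s ` M)")
  case True
  from pigeonhole_infinite[OF inf True] obtain a0 where "a0 \<in> M" "infinite {a\<in>M. s a = s a0}"
    by blast
  then show ?thesis by (intro exI[of _ "{a\<in>M. s a = s a0}"]) auto
next
  case False
  define R where "R = {m\<in>M. \<forall>m'\<in>M. m' < m \<longrightarrow> s m' < s m}"
  have incr: "s m1 < s m2" if "m1 \<in> R" "m2 \<in> R" "m1 < m2" for m1 m2
    using that unfolding R_def by auto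
  have "infinite R"
    unfolding infinite_nat_iff_unbounded
  proof
    fix n
    define V where "V = sum s (M \<inter> {..n})"
    have Vge: "s m' \<le> V" if "m' \<in> M" "m' \<le> n" for m'
    proof -
      have "s m' = sum s {m'}" by simp
      also have "\<dots> \<le> sum s (M \<inter> {..n})"
        by (rule sum_mono2) (use that nn in auto)
      finally show ?thesis by (simp add: V_def)
    qed
    have "\<exists>m\<in>M. s m > V"
    proof (rule ccontr)
      assume "\<not> (\<exists>m\<in>M. s m > V)"
      then have "s ` M \<subseteq> {0..V}" using nn by force
      then have "finite (s ` M)" using finite_subset by blast
      with False show False by simp
    qed
    then obtain m where m: "m \<in> M \<and> s m > V" by blast
    define m0 where "m0 = (LEAST m. m \<in> M \<and> s m > V)"
    have m0: "m0 \<in> M \<and> s m0 > V" unfolding m0_def by (rule LeastI[of _ m]) (use m in auto)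
    have m0le: "\<And>m'. m' \<in> M \<and> s m' > V \<Longrightarrow> m0 \<le> m'" unfolding m0_def by (rule Least_le)
    have "m0 > n"
    proof (rule ccontr)
      assume "\<not> n < m0"
      then have "m0 \<le> n" by simp
      then have "s m0 \<le> V" using Vge m0 by blast
      then show False using m0 by simp
    qed
    moreover have "m0 \<in> R"
      unfolding R_def
    proof (intro CollectI conjI ballI impI)
      show "m0 \<in> M" using m0 by simp
      fix m' assume "m' \<in> M" "m' < m0"
      then have "s m' \<le> V" using m0le[of m'] by force
      then show "s m' < s m0" using m0 by simp
    qed
    ultimately show "\<exists>m>n. m \<in> R" by blast
  qed
  moreover have "finite {m\<in>R. s m < N}" for N
  proof -
    have inj: "inj_on s {m\<in>R. s m < N}"
    proof (rule inj_onI)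
      fix x y assume "x \<in> {m\<in>R. s m < N}" "y \<in> {m\<in>R. s m < N}" "s x = s y"
      then show "x = y" using incr[of x y] incr[of y x] by (cases x y rule: linorder_cases) auto
    qed
    have "s ` {m\<in>R. s m < N} \<subseteq> {0..N}" using nn unfolding R_def by auto
    then have "finite (s ` {m\<in>R. s m < N})" using finite_subset by blast
    then show ?thesis using inj finite_imageD by blast
  qed
  moreover have "R \<subseteq> M" unfolding R_def by auto
  ultimately show ?thesis by blast
qed

lemma dichI:
  fixes s :: "nat \<Rightarrow> nat \<Rightarrow> int"
  assumes "finite I"
  shows "infinite M \<Longrightarrow> (\<forall>m\<in>M. \<forall>i\<in>I. s m i \<ge> 0) \<Longrightarrow>
    \<exists>M'\<subseteq>M. infinite M' \<and> (\<exists>J\<subseteq>I. (\<forall>i\<in>I-J. \<exists>v. \<forall>m\<in>M'. s m i = v)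
        \<and> (\<forall>i\<in>J. \<forall>N. finite {m\<in>M'. s m i < N}))"
  using assms
proof (induction I arbitrary: M rule: finite_induct)
  case empty
  then show ?case by blast
next
  case (insert i I)
  have nnI: "\<forall>m\<in>M. \<forall>i\<in>I. s m i \<ge> 0" using insert.prems(2) by auto
  obtain M1 J where M1: "M1 \<subseteq> M" "infinite M1" "J \<subseteq> I"
    "\<forall>i\<in>I-J. \<exists>v. \<forall>m\<in>M1. s m i = v" "\<forall>i\<in>J. \<forall>N. finite {m\<in>M1. s m i < N}"
    using insert.IH[OF insert.prems(1) nnI] by blast
  have "\<forall>m\<in>M1. s m i \<ge> 0" using insert.prems M1(1) by auto
  from dich1[OF M1(2) this] obtain M2 where M2: "M2 \<subseteq> M1" "infinite M2"
    "(\<exists>v. \<forall>m\<in>M2. s m i = v) \<or> (\<forall>N. finite {m\<in>M2. s m i < N})" by blast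
  have c1: "\<forall>i\<in>I-J. \<exists>v. \<forall>m\<in>M2. s m i = v" using M1(4) M2(1) by blast
  have c2: "\<forall>i\<in>J. \<forall>N. finite {m\<in>M2. s m i < N}"
  proof (intro ballI allI)
    fix i' N assume "i' \<in> J"
    then have "finite {m\<in>M1. s m i' < N}" using M1(5) by blast
    then show "finite {m\<in>M2. s m i' < N}" by (rule finite_subset[rotated]) (use M2(1) in auto)
  qed
  from M2(3) show ?case
  proof
    assume "\<exists>v. \<forall>m\<in>M2. s m i = v"
    then show ?thesis using c1 c2 M2(1,2) M1(1,3) insert.hyps
      by (intro exI[of _ M2] conjI exI[of _ J]) auto
  next
    assume "\<forall>N. finite {m\<in>M2. s m i < N}"
    then show ?thesis using c1 c2 M2(1,2) M1(1,3) insert.hyps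
      by (intro exI[of _ M2] conjI exI[of _ "insert i J"]) auto
  qed
qed

definition good :: "nat \<Rightarrow> ab list \<Rightarrow> bool" where
  "good m w \<longleftrightarrow> (\<exists>x. w = x @ replicate m A \<and> (x = [] \<or> last x = B))"

locale absS =
  fixes k :: nat and st :: "ab list \<Rightarrow> nat" and cv :: "ab list \<Rightarrow> nat \<Rightarrow> int"
    and Q :: "nat set" and D :: int
  assumes finQ: "finite Q" and stQ: "st w \<in> Q"
    and cv_nonneg: "i < k \<Longrightarrow> cv w i \<ge> 0"
    and cv_bound: "i < k \<Longrightarrow> \<bar>cv (w@u) i - cv w i\<bar> \<le> D * int (length u)"
    and transfer: "st w = st w' \<Longrightarrow> (\<forall>i<k. cv w i \<le> cv w' i) \<Longrightarrow> w@u \<in> Lab \<Longrightarrow> w'@u \<in> Lab"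
begin

lemma pairing:
  assumes "good m1 w1" "good m2 w2" "m2 < m1" "1 \<le> m2" "st w1 = st w2"
    "\<forall>i<k. cv w1 i \<le> cv w2 i"
  shows False
proof -
  obtain x1 where x1: "w1 = x1 @ replicate m1 A" "x1 = [] \<or> last x1 = B" using assms(1) good_def by auto
  obtain x2 where x2: "w2 = x2 @ replicate m2 A" "x2 = [] \<or> last x2 = B" using assms(2) good_def by auto
  have "x1 @ replicate m1 A @ replicate m1 B \<in> Lab" using Lab_iff[OF x1(2)] assms(3,4) by simp
  then have "w1 @ replicate m1 B \<in> Lab" using x1 by simp
  then have "w2 @ replicate m1 B \<in> Lab" using transfer assms(5,6) by blast
  then have "x2 @ replicate m2 A @ replicate m1 B \<in> Lab" using x2 by simp
  then have "m1 \<le> m2" using Lab_iff[OF x2(2)] assms(4) by blast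
  then show False using assms(3) by simp
qed

definition fam :: "nat set \<Rightarrow> nat \<Rightarrow> (nat \<Rightarrow> int) \<Rightarrow> nat \<Rightarrow> bool" where
  "fam \<Omega> q f m \<longleftrightarrow> (\<forall>N. \<exists>w. good m w \<and> st w = q \<and> (\<forall>i\<in>\<Omega>. cv w i \<ge> N)
      \<and> (\<forall>i<k. i \<notin> \<Omega> \<longrightarrow> cv w i = f i))"

definition PP :: "nat set \<Rightarrow> bool" where
  "PP \<Omega> \<longleftrightarrow> (\<forall>m\<ge>1. \<exists>q f. fam \<Omega> q f m)"

lemma PP_empty: "PP {}"
  unfolding PP_def fam_def
proof (intro allI impI)
  fix m :: nat assume "1 \<le> m"
  have "good m (replicate m A)" unfolding good_def by (intro exI[of _ "[]"]) simp
  then show "\<exists>q f. \<forall>N. \<exists>w. good m w \<and> st w = q \<and> (\<forall>i\<in>{}. N \<le> cv w i) \<and> (\<forall>i<k. i \<notin> {} \<longrightarrow> cv w i = f i)"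
    by blast
qed

lemma step:
  assumes Om: "\<Omega> \<subseteq> {..<k}" and P: "PP \<Omega>"
  shows "\<exists>\<Omega>'. \<Omega> \<subset> \<Omega>' \<and> \<Omega>' \<subseteq> {..<k} \<and> PP \<Omega>'"
proof -
  have "\<forall>m. \<exists>qf. 1 \<le> m \<longrightarrow> fam \<Omega> (fst qf) (snd qf) m" using P unfolding PP_def by auto
  then have "\<exists>qf. \<forall>m. 1 \<le> m \<longrightarrow> fam \<Omega> (fst (qf m)) (snd (qf m)) m" by (rule choice)
  then obtain qf where qf0: "\<forall>m. 1 \<le> m \<longrightarrow> fam \<Omega> (fst (qf m)) (snd (qf m)) m" by blast
  define qq where "qq m = fst (qf m)" for m
  define ff where "ff m = snd (qf m)" for m
  have qf: "fam \<Omega> (qq m) (ff m) m" if "1 \<le> m" for m using qf0 that unfolding qq_def ff_def by blast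
  define M0 where "M0 = {m::nat. 1 \<le> m}"
  have infM0: "infinite M0" unfolding M0_def infinite_nat_iff_unbounded
  proof
    fix m show "\<exists>n>m. n \<in> {m::nat. 1 \<le> m}" by (rule exI[of _ "Suc m"]) simp
  qed
  have qQ: "qq m \<in> Q" if "m \<in> M0" for m
  proof -
    have "1 \<le> m" using that unfolding M0_def by simp
    from qf[OF this] obtain w where "st w = qq m" unfolding fam_def by blast
    then show ?thesis using stQ[of w] by simp
  qed
  have fnn: "ff m i \<ge> 0" if "m \<in> M0" "i < k" "i \<notin> \<Omega>" for m i
  proof -
    have "1 \<le> m" using that unfolding M0_def by simp
    from qf[OF this] obtain w where "\<forall>i<k. i \<notin> \<Omega> \<longrightarrow> cv w i = ff m i" unfolding fam_def by blast
    then show ?thesis using cv_nonneg[of i w] that by simp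
  qed
  have "qq ` M0 \<subseteq> Q" using qQ by blast
  then have "finite (qq ` M0)" by (rule finite_subset[OF _ finQ])
  from pigeonhole_infinite[OF infM0 this] obtain m0 where m0: "m0 \<in> M0"
    "infinite {m\<in>M0. qq m = qq m0}" by blast
  define M1 where "M1 = {m\<in>M0. qq m = qq m0}"
  define I where "I = {..<k} - \<Omega>"
  have finI: "finite I" unfolding I_def by simp
  have infM1: "infinite M1" using m0(2) unfolding M1_def by simp
  have nn1: "\<forall>m\<in>M1. \<forall>i\<in>I. ff m i \<ge> 0" using fnn unfolding M1_def I_def by auto
  obtain M2 J where M2: "M2 \<subseteq> M1" "infinite M2" "J \<subseteq> I"
    "\<forall>i\<in>I-J. \<exists>v. \<forall>m\<in>M2. ff m i = v" "\<forall>i\<in>J. \<forall>N. finite {m\<in>M2. ff m i < N}"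
    using dichI[OF finI infM1 nn1] by blast
  have M2M0: "M2 \<subseteq> M0" using M2(1) unfolding M1_def by auto
  have M2q: "qq m = qq m0" if "m \<in> M2" for m using that M2(1) unfolding M1_def by auto
  have "\<exists>v. \<forall>i\<in>I-J. \<forall>m\<in>M2. ff m i = v i" using M2(4) by (rule bchoice)
  then obtain v where v: "\<forall>i\<in>I-J. \<forall>m\<in>M2. ff m i = v i" by blast
  have Jne: "J \<noteq> {}"
  proof
    assume J: "J = {}"
    have "M2 \<noteq> {}" using M2(2) by (rule infinite_imp_nonempty)
    then obtain m1 where m1: "m1 \<in> M2" by blast
    obtain m2 where m2: "m2 \<in> M2" "m1 < m2" using M2(2) unfolding infinite_nat_iff_unbounded by blast
    obtain w2 where w2: "good m2 w2" "st w2 = qq m2" "\<forall>i<k. i \<notin> \<Omega> \<longrightarrow> cv w2 i = ff m2 i"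
      using qf[of m2] m2 M2M0 unfolding fam_def M0_def by blast
    define Nm where "Nm = (\<Sum>i<k. cv w2 i)"
    have le: "cv w2 i \<le> Nm" if "i < k" for i
      unfolding Nm_def by (rule member_le_sum) (use that cv_nonneg in auto)
    obtain w1 where w1: "good m1 w1" "st w1 = qq m1" "\<forall>i\<in>\<Omega>. cv w1 i \<ge> Nm"
      "\<forall>i<k. i \<notin> \<Omega> \<longrightarrow> cv w1 i = ff m1 i"
      using qf[of m1] m1 M2M0 unfolding fam_def M0_def by blast
    have "\<forall>i<k. cv w2 i \<le> cv w1 i"
    proof (intro allI impI)
      fix i assume i: "i < k"
      show "cv w2 i \<le> cv w1 i"
      proof (cases "i \<in> \<Omega>")
        case True then show ?thesis using le[OF i] w1(3) by force
      next
        case False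
        then have "i \<in> I - J" using i J unfolding I_def by auto
        then show ?thesis using v m1 m2 w1(4) w2(3) i False by auto
      qed
    qed
    moreover have "st w2 = st w1" using w1(2) w2(2) M2q m1 m2 by simp
    moreover have "1 \<le> m1" using m1 M2M0 unfolding M0_def by auto
    ultimately show False using pairing[OF w2(1) w1(1) m2(2)] by blast
  qed
  define \<Omega>' where "\<Omega>' = \<Omega> \<union> J"
  have sub: "\<Omega> \<subset> \<Omega>'" using Jne M2(3) unfolding \<Omega>'_def I_def by auto
  have sub2: "\<Omega>' \<subseteq> {..<k}" using Om M2(3) unfolding \<Omega>'_def I_def by auto
  have "PP \<Omega>'" unfolding PP_def
  proof (intro allI impI)
    fix m'' :: nat assume m'': "1 \<le> m''"
    define C where "C = D * int (m'' + 1)"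
    define L where "L = filter (\<lambda>i. i \<notin> \<Omega>') [0..<k]"
    define Vs where "Vs = (\<Sum>i<k. \<bar>v i\<bar>)"
    have ex: "\<exists>w. good m'' w \<and> (\<forall>i\<in>\<Omega>'. cv w i \<ge> N) \<and> (\<forall>i<k. i \<notin> \<Omega>' \<longrightarrow> \<bar>cv w i\<bar> \<le> Vs + C)" for N
    proof -
      have finJ: "finite J" using M2(3) finI finite_subset by blast
      have "{m\<in>M2. \<exists>i\<in>J. ff m i < N + C} = (\<Union>i\<in>J. {m\<in>M2. ff m i < N + C})" by auto
      then have fin: "finite {m\<in>M2. \<exists>i\<in>J. ff m i < N + C}" using finJ M2(5) by simp
      have "infinite (M2 - {m\<in>M2. \<exists>i\<in>J. ff m i < N + C})" using M2(2) fin by (rule Diff_infinite_finite[rotated])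
      then have "M2 - {m\<in>M2. \<exists>i\<in>J. ff m i < N + C} \<noteq> {}" by (rule infinite_imp_nonempty)
      then obtain m where "m \<in> M2 - {m\<in>M2. \<exists>i\<in>J. ff m i < N + C}" by blast
      then have m: "m \<in> M2" "\<forall>i\<in>J. ff m i \<ge> N + C" by auto
      obtain w where w: "good m w" "\<forall>i\<in>\<Omega>. cv w i \<ge> N + C" "\<forall>i<k. i \<notin> \<Omega> \<longrightarrow> cv w i = ff m i"
        using qf[of m] m M2M0 unfolding fam_def M0_def by blast
      define w'' where "w'' = w @ (B # replicate m'' A)"
      have g: "good m'' w''" unfolding good_def w''_def by (intro exI[of _ "w@[B]"]) simp
      have bd: "\<bar>cv w'' i - cv w i\<bar> \<le> C" if "i < k" for i
        using cv_bound[OF that, of w "B # replicate m'' A"] unfolding w''_def C_def by simp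
      have c1: "\<forall>i\<in>\<Omega>'. cv w'' i \<ge> N"
      proof
        fix i assume i: "i \<in> \<Omega>'"
        then have ik: "i < k" using sub2 by auto
        have "cv w i \<ge> N + C"
        proof (cases "i \<in> \<Omega>")
          case True then show ?thesis using w(2) by blast
        next
          case False then have "i \<in> J" using i unfolding \<Omega>'_def by auto
          then show ?thesis using m(2) w(3) ik False by auto
        qed
        then show "cv w'' i \<ge> N" using bd[OF ik] by linarith
      qed
      have c2: "\<forall>i<k. i \<notin> \<Omega>' \<longrightarrow> \<bar>cv w'' i\<bar> \<le> Vs + C"
      proof (intro allI impI)
        fix i assume ik: "i < k" and ni: "i \<notin> \<Omega>'"
        then have iIJ: "i \<in> I - J" unfolding I_def \<Omega>'_def by auto
        then have "cv w i = v i" using w(3) v m(1) ik ni unfolding \<Omega>'_def by auto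
        moreover have "\<bar>v i\<bar> \<le> Vs" unfolding Vs_def by (rule member_le_sum) (use ik in auto)
        ultimately show "\<bar>cv w'' i\<bar> \<le> Vs + C" using bd[OF ik] by linarith
      qed
      show ?thesis using g c1 c2 by blast
    qed
    define sg where "sg w = (st w, map (cv w) L)" for w
    define S where "S = Q \<times> {xs. set xs \<subseteq> {-(Vs+C)..Vs+C} \<and> length xs = length L}"
    have finS: "finite S" unfolding S_def using finQ by (intro finite_cartesian_product finite_lists_length_eq) auto
    have sgS: "sg w \<in> S" if "\<forall>i<k. i \<notin> \<Omega>' \<longrightarrow> \<bar>cv w i\<bar> \<le> Vs + C" for w
    proof -
      have "\<bar>cv w i\<bar> \<le> Vs + C" if "i < k" "i \<notin> \<Omega>'" for i using that \<open>\<forall>i<k. i \<notin> \<Omega>' \<longrightarrow> \<bar>cv w i\<bar> \<le> Vs + C\<close> by blast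
      then have "- (Vs + C) \<le> cv w i \<and> cv w i \<le> Vs + C" if "i < k" "i \<notin> \<Omega>'" for i using that by (smt (verit))
      then show ?thesis using stQ[of w] unfolding sg_def S_def L_def by auto
    qed
    have "\<exists>\<sigma>\<in>S. \<forall>N. \<exists>w. good m'' w \<and> (\<forall>i\<in>\<Omega>'. cv w i \<ge> N) \<and> sg w = \<sigma>"
    proof (rule ccontr)
      assume "\<not> ?thesis"
      then have "\<forall>\<sigma>\<in>S. \<exists>N. \<forall>w. good m'' w \<and> (\<forall>i\<in>\<Omega>'. cv w i \<ge> N) \<longrightarrow> sg w \<noteq> \<sigma>" by blast
      then have "\<exists>Nf. \<forall>\<sigma>\<in>S. \<forall>w. good m'' w \<and> (\<forall>i\<in>\<Omega>'. cv w i \<ge> Nf \<sigma>) \<longrightarrow> sg w \<noteq> \<sigma>"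
        by (rule bchoice)
      then obtain Nf where Nf: "\<forall>\<sigma>\<in>S. \<forall>w. good m'' w \<and> (\<forall>i\<in>\<Omega>'. cv w i \<ge> Nf \<sigma>) \<longrightarrow> sg w \<noteq> \<sigma>"
        by blast
      define N0 where "N0 = (\<Sum>\<sigma>\<in>S. \<bar>Nf \<sigma>\<bar>)"
      obtain w where w: "good m'' w" "\<forall>i\<in>\<Omega>'. cv w i \<ge> N0" "\<forall>i<k. i \<notin> \<Omega>' \<longrightarrow> \<bar>cv w i\<bar> \<le> Vs + C"
        using ex[of N0] by blast
      have inS: "sg w \<in> S" using sgS w(3) by blast
      have "\<bar>Nf (sg w)\<bar> \<le> N0" unfolding N0_def by (rule member_le_sum) (use inS finS in auto)
      then have "\<forall>i\<in>\<Omega>'. cv w i \<ge> Nf (sg w)" using w(2) by force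
      then show False using Nf inS w(1) by blast
    qed
    then obtain \<sigma> where \<sigma>: "\<forall>N. \<exists>w. good m'' w \<and> (\<forall>i\<in>\<Omega>'. cv w i \<ge> N) \<and> sg w = \<sigma>" by blast
    obtain w0 where w0: "sg w0 = \<sigma>" using \<sigma> by blast
    have "fam \<Omega>' (fst \<sigma>) (cv w0) m''"
      unfolding fam_def
    proof
      fix N
      obtain w where w: "good m'' w" "\<forall>i\<in>\<Omega>'. cv w i \<ge> N" "sg w = \<sigma>" using \<sigma> by blast
      have "st w = fst \<sigma>" using w(3) unfolding sg_def by auto
      moreover have "map (cv w) L = map (cv w0) L" using w(3) w0 unfolding sg_def by auto
      then have "\<forall>i<k. i \<notin> \<Omega>' \<longrightarrow> cv w i = cv w0 i" unfolding L_def map_eq_conv by auto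
      ultimately show "\<exists>w. good m'' w \<and> st w = fst \<sigma> \<and> (\<forall>i\<in>\<Omega>'. N \<le> cv w i) \<and> (\<forall>i<k. i \<notin> \<Omega>' \<longrightarrow> cv w i = cv w0 i)"
        using w by blast
    qed
    then show "\<exists>q f. fam \<Omega>' q f m''" by blast
  qed
  then show ?thesis using sub sub2 by blast
qed

lemma absS_False: False
proof -
  have "\<exists>\<Omega>. \<Omega> \<subseteq> {..<k} \<and> n \<le> card \<Omega> \<and> PP \<Omega>" for n
  proof (induction n)
    case 0 show ?case using PP_empty by blast
  next
    case (Suc n)
    then obtain \<Omega> where O: "\<Omega> \<subseteq> {..<k}" "n \<le> card \<Omega>" "PP \<Omega>" by blast
    obtain \<Omega>' where o: "\<Omega> \<subset> \<Omega>'" "\<Omega>' \<subseteq> {..<k}" "PP \<Omega>'" using step[OF O(1) O(3)] by blast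
    have "finite \<Omega>'" using o(2) by (rule finite_subset) simp
    then have "card \<Omega> < card \<Omega>'" using o(1) psubset_card_mono by blast
    then show ?case using o \<open>n \<le> card \<Omega>\<close> by (intro exI[of _ \<Omega>']) simp
  qed
  then obtain \<Omega> where "\<Omega> \<subseteq> {..<k}" "Suc k \<le> card \<Omega>" by blast
  moreover have "card \<Omega> \<le> card {..<k}" by (rule card_mono[OF _ \<open>\<Omega> \<subseteq> {..<k}\<close>]) simp
  ultimately show False by simp
qed

end

lemma run_set: "is_run k V w ts \<Longrightarrow> set ts \<subseteq> delta V"
proof
  fix t assume "is_run k V w ts" "t \<in> set ts"
  then obtain i where "i < length ts" "t = ts ! i" by (auto simp: in_set_conv_nth)
  then show "t \<in> delta V" using \<open>is_run k V w ts\<close> unfolding is_run_def by metis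
qed

lemma eff_len: "is_vass k V \<Longrightarrow> t \<in> delta V \<Longrightarrow> length (eff t) = k"
  unfolding is_vass_def eff_def by (cases t) auto

lemma tgt_states: "is_vass k V \<Longrightarrow> t \<in> delta V \<Longrightarrow> tgt t \<in> states V"
  unfolding is_vass_def tgt_def by (cases t) auto

lemma cnt: "is_vass k V \<Longrightarrow> set ts \<subseteq> delta V \<Longrightarrow> counters k ts = map (es ts) [0..<k]"
  by (rule counters_es) (use eff_len in blast)

lemma run_transfer:
  assumes V: "is_vass k V"
  shows "is_run k V (w@u) (xs @ Y) \<Longrightarrow> length xs = length w \<Longrightarrow> is_run k V w' xs'
    \<Longrightarrow> last_state V xs = last_state V xs' \<Longrightarrow> (\<forall>i<k. es xs i \<le> es xs' i)
    \<Longrightarrow> is_run k V (w'@u) (xs' @ Y)"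
proof (induction u arbitrary: Y rule: rev_induct)
  case Nil
  then have "Y = []" using is_run_length[OF Nil.prems(1)] by simp
  then show ?case using Nil by simp
next
  case (snoc a u)
  have "length Y = length u + 1" using is_run_length[OF snoc.prems(1)] snoc.prems(2) by simp
  then obtain Y0 t where Y: "Y = Y0 @ [t]" by (cases Y rule: rev_cases) auto
  have H: "is_run k V ((w@u)@[a]) ((xs@Y0)@[t])" using snoc.prems(1) Y by simp
  then have H1: "is_run k V (w@u) (xs@Y0)" and H2: "t \<in> delta V" "lbl t = a" "src t = last_state V (xs@Y0)"
    and H3: "\<forall>x\<in>set (counters k ((xs@Y0)@[t])). x \<ge> 0"
    unfolding is_run_snoc by auto
  have IH: "is_run k V (w'@u) (xs'@Y0)" using snoc.IH[OF H1 snoc.prems(2-5)] .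
  have ls: "last_state V (xs'@Y0) = last_state V (xs@Y0)"
    using snoc.prems(4) by (simp add: last_state_append)
  have s1: "set ((xs@Y0)@[t]) \<subseteq> delta V" using run_set[OF H] .
  have s2: "set ((xs'@Y0)@[t]) \<subseteq> delta V" using run_set[OF IH] run_set[OF H] by auto
  have "\<forall>x\<in>set (counters k ((xs'@Y0)@[t])). x \<ge> 0"
  proof
    fix x assume "x \<in> set (counters k ((xs'@Y0)@[t]))"
    then obtain i where i: "i < k" "x = es ((xs'@Y0)@[t]) i" unfolding cnt[OF V s2] by auto
    have "es ((xs@Y0)@[t]) i \<in> set (counters k ((xs@Y0)@[t]))" unfolding cnt[OF V s1] using i by auto
    then have "es ((xs@Y0)@[t]) i \<ge> 0" using H3 by blast
    moreover have "es xs i \<le> es xs' i" using snoc.prems(5) i by blast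
    ultimately show "x \<ge> 0" using i by simp
  qed
  then have "is_run k V ((w'@u)@[a]) ((xs'@Y0)@[t])"
    unfolding is_run_snoc using IH H2 ls by simp
  then show ?case using Y by simp
qed

lemma es_bound: "(\<forall>t\<in>set Z. \<bar>eff t ! i\<bar> \<le> D) \<Longrightarrow> \<bar>es Z i\<bar> \<le> D * int (length Z)"
proof (induction Z)
  case Nil then show ?case by (simp add: es_def)
next
  case (Cons t Z)
  have "es (t # Z) i = eff t ! i + es Z i" by (simp add: es_def)
  then show ?case using Cons by (simp add: algebra_simps) (smt (verit))
qed

theorem notCH: "Lab \<notin> CH"
proof
  assume "Lab \<in> CH"
  then obtain k V where V: "is_vass k V" "history_deterministic k V" "lang k V = Lab"
    unfolding CH_def CH_k_def by blast
  obtain r where r: "is_resolver k V r" using V(2) unfolding history_deterministic_def by blast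
  have rd: "r h a \<in> delta V" for h a using r unfolding is_resolver_def by blast
  have racc: "accepting_run k V w (resolve r [] w)" if "w \<in> Lab" for w
    using r that V(3) unfolding is_resolver_def by blast
  define \<rho> where "\<rho> w = resolve r [] w" for w
  have rsnoc: "\<rho> (w@[a]) = \<rho> w @ [r (\<rho> w) a]" for w a unfolding \<rho>_def by (rule resolve_snoc)
  have run: "is_run k V w (\<rho> w)" for w
  proof -
    have "is_run k V (w@[A]) (\<rho> w @ [r (\<rho> w) A])"
      using racc[OF snocA_Lab[of w]] rsnoc unfolding accepting_run_def \<rho>_def by simp
    then show ?thesis unfolding is_run_snoc by blast
  qed
  define D where "D = (\<Sum>t\<in>delta V. \<Sum>i<k. \<bar>eff t ! i\<bar>)"
  have finD: "finite (delta V)" using V(1) unfolding is_vass_def by blast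
  have Dge: "\<bar>eff t ! i\<bar> \<le> D" if "t \<in> delta V" "i < k" for t i
  proof -
    have "\<bar>eff t ! i\<bar> \<le> (\<Sum>i<k. \<bar>eff t ! i\<bar>)" by (rule member_le_sum) (use that in auto)
    also have "\<dots> \<le> D" unfolding D_def by (rule member_le_sum[of t "delta V" "\<lambda>t. \<Sum>i<k. \<bar>eff t ! i\<bar>"]) (use that finD in \<open>auto intro: sum_nonneg\<close>)
    finally show ?thesis .
  qed
  have a1: "finite (states V)" using V(1) unfolding is_vass_def by blast
  have a2: "last_state V (\<rho> w) \<in> states V" for w
  proof (cases "\<rho> w = []")
    case True then show ?thesis using V(1) unfolding last_state_def is_vass_def by simp
  next
    case False
    then have "last (\<rho> w) \<in> delta V" using run_set[OF run[of w]] last_in_set by blast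
    then show ?thesis using False tgt_states[OF V(1)] unfolding last_state_def by simp
  qed
  have a3: "es (\<rho> w) i \<ge> 0" if i: "i < k" for i w
  proof -
    have "\<forall>j \<le> length (\<rho> w). \<forall>x\<in>set (counters k (take j (\<rho> w))). x \<ge> 0"
      using run[of w] unfolding is_run_def by blast
    then have "\<forall>x\<in>set (counters k (take (length (\<rho> w)) (\<rho> w))). x \<ge> 0" by blast
    then have "\<forall>x\<in>set (counters k (\<rho> w)). x \<ge> 0" by simp
    then show "es (\<rho> w) i \<ge> 0" unfolding cnt[OF V(1) run_set[OF run[of w]]] using i by auto
  qed
  have a4: "\<bar>es (\<rho> (w@u)) i - es (\<rho> w) i\<bar> \<le> D * int (length u)" if i: "i < k" for i w u
  proof -
    obtain Z where Z: "resolve r (\<rho> w) u = \<rho> w @ Z" "length Z = length u" "\<forall>t\<in>set Z. \<exists>h' a. t = r h' a"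
      using resolve_prefix[of r "\<rho> w" u] by (elim exE conjE) blast
    have e: "\<rho> (w@u) = \<rho> w @ Z" using Z(1) unfolding \<rho>_def resolve_append by simp
    have "\<forall>t\<in>set Z. \<bar>eff t ! i\<bar> \<le> D"
    proof
      fix t assume "t \<in> set Z"
      then obtain h' a where "t = r h' a" using Z(3) by blast
      then show "\<bar>eff t ! i\<bar> \<le> D" using rd Dge[OF _ i] by simp
    qed
    then have "\<bar>es Z i\<bar> \<le> D * int (length Z)" by (rule es_bound)
    then show ?thesis using e Z(2) by simp
  qed
  have a5: "w' @ u \<in> Lab" if st: "last_state V (\<rho> w) = last_state V (\<rho> w')"
    and le: "\<forall>i<k. es (\<rho> w) i \<le> es (\<rho> w') i" and L: "w @ u \<in> Lab" for w w' u
  proof -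
    obtain Z where Z: "resolve r (\<rho> w) u = \<rho> w @ Z" "length Z = length u" "\<forall>t\<in>set Z. \<exists>h' a. t = r h' a"
      using resolve_prefix[of r "\<rho> w" u] by (elim exE conjE) blast
    have e: "\<rho> (w@u) = \<rho> w @ Z" using Z(1) unfolding \<rho>_def resolve_append by simp
    have acc: "accepting_run k V (w@u) (\<rho> w @ Z)" using racc[OF L] e unfolding \<rho>_def by simp
    have lenw: "length (\<rho> w) = length w" using is_run_length[OF run[of w]] .
    have R: "is_run k V (w'@u) (\<rho> w' @ Z)"
      by (rule run_transfer[OF V(1) _ lenw run[of w'] st le]) (use acc in \<open>simp add: accepting_run_def\<close>)
    have "last_state V (\<rho> w' @ Z) = last_state V (\<rho> w @ Z)"
      using st by (simp add: last_state_append)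
    then have "accepting_run k V (w'@u) (\<rho> w' @ Z)" using R acc unfolding accepting_run_def by simp
    then show "w' @ u \<in> Lab" using V(3) unfolding lang_def by blast
  qed
  interpret absS k "\<lambda>w. last_state V (\<rho> w)" "\<lambda>w i. es (\<rho> w) i" "states V" D
    by unfold_locales (fact a1, fact a2, fact a3, fact a4, fact a5)
  show False by (rule absS_False)
qed

definition V1 :: "ab vass" where
  "V1 = \<lparr>states = {0,1,2,3}, init = 0, final = {0,2,3},
         delta = {(0,A,[0],1),(0,B,[0],1),(1,A,[0],1),(1,B,[0],1),
                  (0,A,[1],2),(1,A,[1],2),(2,A,[1],2),(2,B,[-1],3),(3,B,[-1],3)}\<rparr>"

lemma V1_vass: "is_vass 1 V1"
  by (simp add: is_vass_def V1_def)

lemma V1_simps[simp]: "init V1 = 0" "final V1 = {0,2,3}" "states V1 = {0,1,2,3}"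
  by (simp_all add: V1_def)

lemma delta_V1: "delta V1 = {(0,A,[0],1),(0,B,[0],1),(1,A,[0],1),(1,B,[0],1),
                  (0,A,[1],2),(1,A,[1],2),(2,A,[1],2),(2,B,[-1],3),(3,B,[-1],3)}"
  by (simp add: V1_def)

lemma last_state_single[simp]: "last_state V [t] = tgt t"
  by (simp add: last_state_def)

lemma trans_simps[simp]: "src (p,a,d,q) = p" "lbl (p,a,d,q) = a" "eff (p,a,d,q) = d" "tgt (p,a,d,q) = q"
  by (simp_all add: src_def lbl_def eff_def tgt_def)

lemma run1_snoc:
  assumes "is_run 1 V1 w ts" "t \<in> delta V1" "lbl t = a" "src t = last_state V1 ts"
    "es ts 0 + eff t ! 0 \<ge> 0"
  shows "is_run 1 V1 (w@[a]) (ts@[t])"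
proof -
  have s: "set (ts@[t]) \<subseteq> delta V1" using run_set[OF assms(1)] assms(2) by auto
  have "\<forall>x\<in>set (counters 1 (ts@[t])). x \<ge> 0"
    unfolding cnt[OF V1_vass s] using assms(5) by (simp add: es_def)
  then show ?thesis unfolding is_run_snoc using assms by blast
qed

lemma run1_nonneg: "is_run 1 V1 w ts \<Longrightarrow> es ts 0 \<ge> 0"
proof -
  assume r: "is_run 1 V1 w ts"
  have "\<forall>j \<le> length ts. \<forall>x\<in>set (counters 1 (take j ts)). x \<ge> 0"
    using r unfolding is_run_def by blast
  then have "\<forall>x\<in>set (counters 1 ts). x \<ge> 0" by (metis order_refl take_all)
  then show ?thesis unfolding cnt[OF V1_vass run_set[OF r]] by simp
qed

definition Inv :: "ab list \<Rightarrow> nat \<Rightarrow> int \<Rightarrow> bool" where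
  "Inv w q c \<longleftrightarrow> (q = 0 \<longrightarrow> w = [] \<and> c = 0) \<and> (q = 1 \<longrightarrow> c = 0)
     \<and> (q = 2 \<longrightarrow> (\<exists>u j. w = u @ replicate j A \<and> j \<ge> 1 \<and> c = int j))
     \<and> (q = 3 \<longrightarrow> (\<exists>u j l. w = u @ replicate j A @ replicate l B \<and> j \<ge> 1 \<and> c = int j - int l))"

lemma inv_run: "is_run 1 V1 w ts \<Longrightarrow> Inv w (last_state V1 ts) (es ts 0)"
proof (induction w arbitrary: ts rule: rev_induct)
  case Nil
  then have "ts = []" using is_run_length by fastforce
  then show ?case by (simp add: Inv_def last_state_def es_def)
next
  case (snoc a w)
  have "length ts = length w + 1" using is_run_length[OF snoc.prems] by simp
  then obtain ts0 t where ts: "ts = ts0 @ [t]" by (cases ts rule: rev_cases) auto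
  have r: "is_run 1 V1 w ts0" "t \<in> delta V1" "lbl t = a" "src t = last_state V1 ts0"
    using snoc.prems unfolding ts is_run_snoc by auto
  have I: "Inv w (last_state V1 ts0) (es ts0 0)" using snoc.IH[OF r(1)] .
  have e: "es ts 0 = es ts0 0 + eff t ! 0" unfolding ts by (simp add: es_def)
  have ls: "last_state V1 ts = tgt t" unfolding ts by simp
  from r(2) have "t \<in> {(0,A,[0],1),(0,B,[0],1),(1,A,[0],1),(1,B,[0],1),
                  (0,A,[1],2),(1,A,[1],2),(2,A,[1],2),(2,B,[-1],3),(3,B,[-1],3)}"
    by (simp add: V1_def)
  then consider "t = (0,A,[0],1)" | "t = (0,B,[0],1)" | "t = (1,A,[0],1)" | "t = (1,B,[0],1)"
    | "t = (0,A,[1],2)" | "t = (1,A,[1],2)" | "t = (2,A,[1],2)" | "t = (2,B,[-1],3)" | "t = (3,B,[-1],3)"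
    by blast
  then show ?case
  proof cases
    case 1 then show ?thesis using I r e ls by (simp add: Inv_def)
  next
    case 2 then show ?thesis using I r e ls by (simp add: Inv_def)
  next
    case 3 then show ?thesis using I r e ls by (simp add: Inv_def)
  next
    case 4 then show ?thesis using I r e ls by (simp add: Inv_def)
  next
    case 5
    then have "w = []" "es ts0 0 = 0" "a = A" using I r by (auto simp: Inv_def)
    then have "\<exists>u j. w @ [a] = u @ replicate j A \<and> j \<ge> 1 \<and> es ts 0 = int j"
      using 5 e by (intro exI[of _ "[]"] exI[of _ "1::nat"]) simp
    then show ?thesis using 5 ls unfolding Inv_def by simp
  next
    case 6
    then have "es ts0 0 = 0" "a = A" using I r by (auto simp: Inv_def)
    then have "\<exists>u j. w @ [a] = u @ replicate j A \<and> j \<ge> 1 \<and> es ts 0 = int j"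
      using 6 e by (intro exI[of _ w] exI[of _ "1::nat"]) simp
    then show ?thesis using 6 ls unfolding Inv_def by simp
  next
    case 7
    then obtain u j where "w = u @ replicate j A" "j \<ge> 1" "es ts0 0 = int j" "a = A"
      using I r by (auto simp: Inv_def)
    then have "\<exists>u j. w @ [a] = u @ replicate j A \<and> j \<ge> 1 \<and> es ts 0 = int j"
      using 7 e by (intro exI[of _ u] exI[of _ "Suc j"]) (simp add: replicate_append_same)
    then show ?thesis using 7 ls unfolding Inv_def by simp
  next
    case 8
    then obtain u j where "w = u @ replicate j A" "j \<ge> 1" "es ts0 0 = int j" "a = B"
      using I r by (auto simp: Inv_def)
    then have "\<exists>u j l. w @ [a] = u @ replicate j A @ replicate l B \<and> j \<ge> 1 \<and> es ts 0 = int j - int l"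
      using 8 e by (intro exI[of _ u] exI[of _ j] exI[of _ "1::nat"]) simp
    then show ?thesis using 8 ls unfolding Inv_def by simp
  next
    case 9
    then obtain u j l where "w = u @ replicate j A @ replicate l B" "j \<ge> 1" "es ts0 0 = int j - int l" "a = B"
      using I r by (auto simp: Inv_def)
    then have "\<exists>u j l. w @ [a] = u @ replicate j A @ replicate l B \<and> j \<ge> 1 \<and> es ts 0 = int j - int l"
      using 9 e by (intro exI[of _ u] exI[of _ j] exI[of _ "Suc l"]) (simp add: replicate_append_same)
    then show ?thesis using 9 ls unfolding Inv_def by simp
  qed
qed

lemma L1: "u \<noteq> [] \<Longrightarrow> \<exists>ts. is_run 1 V1 u ts \<and> last_state V1 ts = 1 \<and> es ts 0 = 0"
proof (induction u rule: rev_induct)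
  case Nil then show ?case by simp
next
  case (snoc a u)
  show ?case
  proof (cases "u = []")
    case True
    have "is_run 1 V1 ([]@[a]) ([]@[(0,a,[0],1)])"
      by (rule run1_snoc[OF is_run_Nil]) (cases a; simp add: delta_V1 es_def last_state_def)+
    then show ?thesis using True by (intro exI[of _ "[(0,a,[0],1)]"]) (simp add: es_def)
  next
    case False
    then obtain ts where ts: "is_run 1 V1 u ts" "last_state V1 ts = 1" "es ts 0 = 0" using snoc.IH by blast
    have "is_run 1 V1 (u@[a]) (ts@[(1,a,[0],1)])"
      by (rule run1_snoc[OF ts(1)]) (cases a; simp add: delta_V1 ts)+
    then show ?thesis using ts by (intro exI[of _ "ts@[(1,a,[0],1)]"]) (simp add: es_def)
  qed
qed

lemma L2: "j \<ge> 1 \<Longrightarrow> \<exists>ts. is_run 1 V1 (u @ replicate j A) ts \<and> last_state V1 ts = 2 \<and> es ts 0 = int j"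
proof (induction j)
  case 0 then show ?case by simp
next
  case (Suc j)
  show ?case
  proof (cases "j = 0")
    case True
    show ?thesis
    proof (cases "u = []")
      case True
      have "is_run 1 V1 ([]@[A]) ([]@[(0,A,[1],2)])"
        by (rule run1_snoc[OF is_run_Nil]) (simp_all add: delta_V1 es_def last_state_def)
      then show ?thesis using True \<open>j = 0\<close> by (intro exI[of _ "[(0,A,[1],2)]"]) (simp add: es_def)
    next
      case False
      then obtain ts where ts: "is_run 1 V1 u ts" "last_state V1 ts = 1" "es ts 0 = 0" using L1 by blast
      have "is_run 1 V1 (u@[A]) (ts@[(1,A,[1],2)])"
        by (rule run1_snoc[OF ts(1)]) (simp_all add: delta_V1 ts)
      then show ?thesis using ts \<open>j = 0\<close> by (intro exI[of _ "ts@[(1,A,[1],2)]"]) (simp add: es_def)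
    qed
  next
    case False
    then obtain ts where ts: "is_run 1 V1 (u @ replicate j A) ts" "last_state V1 ts = 2" "es ts 0 = int j"
      using Suc.IH by auto
    have "is_run 1 V1 ((u @ replicate j A)@[A]) (ts@[(2,A,[1],2)])"
      by (rule run1_snoc[OF ts(1)]) (simp_all add: delta_V1 ts)
    then show ?thesis using ts by (intro exI[of _ "ts@[(2,A,[1],2)]"]) (simp add: es_def replicate_append_same)
  qed
qed

lemma L3: "j \<ge> 1 \<Longrightarrow> l \<ge> 1 \<Longrightarrow> l \<le> j \<Longrightarrow>
  \<exists>ts. is_run 1 V1 (u @ replicate j A @ replicate l B) ts \<and> last_state V1 ts = 3 \<and> es ts 0 = int j - int l"
proof (induction l)
  case 0 then show ?case by simp
next
  case (Suc l)
  show ?case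
  proof (cases "l = 0")
    case True
    obtain ts where ts: "is_run 1 V1 (u @ replicate j A) ts" "last_state V1 ts = 2" "es ts 0 = int j"
      using L2 Suc.prems by blast
    have "is_run 1 V1 ((u @ replicate j A)@[B]) (ts@[(2,B,[-1],3)])"
      by (rule run1_snoc[OF ts(1)]) (use Suc.prems in \<open>simp_all add: delta_V1 ts\<close>)
    then show ?thesis using ts True by (intro exI[of _ "ts@[(2,B,[-1],3)]"]) (simp add: es_def)
  next
    case False
    then obtain ts where ts: "is_run 1 V1 (u @ replicate j A @ replicate l B) ts" "last_state V1 ts = 3"
      "es ts 0 = int j - int l"
      using Suc.IH Suc.prems by auto
    have "is_run 1 V1 ((u @ replicate j A @ replicate l B)@[B]) (ts@[(3,B,[-1],3)])"
      by (rule run1_snoc[OF ts(1)]) (use Suc.prems in \<open>simp_all add: delta_V1 ts\<close>)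
    then show ?thesis using ts by (intro exI[of _ "ts@[(3,B,[-1],3)]"]) (simp add: es_def replicate_append_same)
  qed
qed

lemma lang_V1: "lang 1 V1 = Lab"
proof
  show "lang 1 V1 \<subseteq> Lab"
  proof
    fix w assume "w \<in> lang 1 V1"
    then obtain ts where r: "is_run 1 V1 w ts" "last_state V1 ts \<in> {0,2,3}"
      unfolding lang_def accepting_run_def by auto
    have I: "Inv w (last_state V1 ts) (es ts 0)" by (rule inv_run[OF r(1)])
    have nn: "es ts 0 \<ge> 0" by (rule run1_nonneg[OF r(1)])
    have "\<exists>u j l. w = u @ replicate j A @ replicate l B \<and> j \<ge> 1 \<and> l \<le> j" if "w \<noteq> []"
    proof -
      consider "last_state V1 ts = 0" | "last_state V1 ts = 2" | "last_state V1 ts = 3" using r(2) by auto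
      then show ?thesis
      proof cases
        case 1 then show ?thesis using I that by (simp add: Inv_def)
      next
        case 2 then obtain u j where "w = u @ replicate j A" "j \<ge> 1" using I by (auto simp: Inv_def)
        then show ?thesis by (intro exI[of _ u] exI[of _ j] exI[of _ "0::nat"]) simp
      next
        case 3 then obtain u j l where "w = u @ replicate j A @ replicate l B" "j \<ge> 1" "es ts 0 = int j - int l"
          using I by (auto simp: Inv_def)
        then show ?thesis using nn by (intro exI[of _ u] exI[of _ j] exI[of _ l]) simp
      qed
    qed
    then show "w \<in> Lab"
    proof (cases "w = []")
      case True then show ?thesis by (simp add: Lab_def)
    next
      case False
      then obtain u j l where w: "w = u @ replicate j A @ replicate l B" "j \<ge> 1" "l \<le> j"
        using \<open>w \<noteq> [] \<Longrightarrow> _\<close> by blast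
      obtain x i where x: "u = x @ replicate i A" "x = [] \<or> last x = B" using decomp by blast
      have "w = x @ replicate (i+j) A @ replicate l B" using w(1) x(1) by (simp add: replicate_add)
      moreover have "x @ replicate (i+j) A @ replicate l B \<in> Lab"
        using Lab_iff[OF x(2), of "i+j" l] w(2,3) by simp
      ultimately show ?thesis by simp
    qed
  qed
next
  show "Lab \<subseteq> lang 1 V1"
  proof
    fix w assume "w \<in> Lab"
    then consider "w = []" | u n m where "w = u @ replicate n A @ replicate m B" "n \<ge> 1" "m \<le> n"
      unfolding Lab_def by blast
    then show "w \<in> lang 1 V1"
    proof cases
      case 1
      then show ?thesis unfolding lang_def accepting_run_def using is_run_Nil
        by (auto simp: last_state_def)
    next
      case (2 u n m)
      show ?thesis
      proof (cases "m = 0")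
        case True
        obtain ts where "is_run 1 V1 (u @ replicate n A) ts" "last_state V1 ts = 2"
          using L2 2 by blast
        then show ?thesis using 2 True unfolding lang_def accepting_run_def by auto
      next
        case False
        obtain ts where "is_run 1 V1 (u @ replicate n A @ replicate m B) ts" "last_state V1 ts = 3"
          using L3[of n m u] 2 False by auto
        then show ?thesis using 2 unfolding lang_def accepting_run_def by auto
      qed
    qed
  qed
qed

theorem mainTheorem4:
  shows "Lab \<in> CN 1 \<and> Lab \<notin> CH"
proof
  show "Lab \<in> CN 1" unfolding CN_def using V1_vass lang_V1 by blast
  show "Lab \<notin> CH" by (rule notCH)
qed

end
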